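(* In the setting below, consider the limiting optimal energy efficiency as a function of the spectral efficiency $\mathrm{SE}\in(0,R_{\mathrm{max}}/(1+\alpha_{\mathrm{rol}})]$: $$\mathrm{EE}_\infty(\mathrm{SE})=\begin{cases}\dfrac{B\,\mathrm{SE}}{P_{\mathrm{sleep}}+\mathrm{SE}\frac{1+\alpha_{\mathrm{rol}}}{\tilde R}(P_0-P_{\mathrm{sleep}}+\gamma\tilde P^{\alpha})}, & \mathrm{SE}\le \tilde R/(1+\alpha_{\mathrm{rol}}),\\[2mm] \dfrac{B\,\mathrm{SE}}{P_0+\gamma\sigma^{2\alpha}(2^{\mathrm{SE}(1+\alpha_{\mathrm{rol}})}-1)^{\alpha}}, & \mathrm{SE}> \tilde R/(1+\alpha_{\mathrm{rol}}).\end{cases}$$ Then: (i) if $R_{\mathrm{a}}\ge R_{\mathrm{max}}$, $\mathrm{EE}_\infty$ is maximized at $\bar{\mathrm{SE}}=\mathrm{SE}_{\mathrm{max}}=R_{\mathrm{max}}/(1+\alpha_{\mathrm{rol}})$, with maximal value $\mathrm{EE}_{\mathrm{max}}=\frac{B\,\mathrm{SE}_{\mathrm{max}}}{P_0+\gamma P_{\mathrm{max}}^{\alpha}}$; (ii) if $R_{\mathrm{a}}<R_{\mathrm{max}}$, $\mathrm{EE}_\infty$ is maximized at $\bar{\mathrm{SE}}=\bar R/(1+\alpha_{\mathrm{rol}})$, where $\bar R$ is a minimizer over $x\in[R_{\mathrm{a}},R_{\mathrm{max}}]$ of the convex function $\frac{P_0+\gamma\sigma^{2\alpha}(2^{x}-1)^{\alpha}}{x}$,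 with maximal value $\mathrm{EE}_{\mathrm{max}}=\frac{B\,\bar{\mathrm{SE}}}{P_0+\gamma\sigma^{2\alpha}(2^{\bar R}-1)^{\alpha}}$.
   Context: Parameters: $T>0$, $\alpha_{\mathrm{rol}}\in[0,1]$, $B=(1+\alpha_{\mathrm{rol}})/T$, $\sigma^2>0$, $P_{\mathrm{max}}\in(0,\infty)$, $\alpha\in(0,1]$, $\gamma>0$, $P_0\ge0$, constant sleep power $P_{\mathrm{sleep}}\in[0,P_0]$. Definitions: $R_{\mathrm{max}}=\log_2(1+P_{\mathrm{max}}/\sigma^2)$; $R_{\mathrm{a}}$ is a minimizer over $x>0$ of $\frac{P_0-P_{\mathrm{sleep}}+\gamma\sigma^{2\alpha}(2^x-1)^{\alpha}}{x}$ (with $R_{\mathrm{a}}=0$ if $P_0=P_{\mathrm{sleep}},\alpha=1$); $P_{\mathrm{a}}=(2^{R_{\mathrm{a}}}-1)\sigma^2$; $\tilde R=\min(R_{\mathrm{a}},R_{\mathrm{max}})$; $\tilde P=\min(P_{\mathrm{a}},P_{\mathrm{max}})$. (The function $\mathrm{EE}_\infty$ is the large-$N$ limit of the optimal energy efficiency $R/(T P^\star_{\mathrm{cons}})$ for the single-user frame-based power minimization problem with rate $R=\mathrm{SE}(1+\alpha_{\mathrm{rol}})$.) *)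

theory Defs
  imports Complex_Main
begin

definition bandwidth :: "real \<Rightarrow> real \<Rightarrow> real" where
  "bandwidth T arol = (1 + arol) / T"

definition Rmax :: "real \<Rightarrow> real \<Rightarrow> real" where
  "Rmax sigma2 Pmax = log 2 (1 + Pmax / sigma2)"

definition fa :: "real \<Rightarrow> real \<Rightarrow> real \<Rightarrow> real \<Rightarrow> real \<Rightarrow> real \<Rightarrow> real" where
  "fa sigma2 alpha gamma P0 Psleep x =
     (P0 - Psleep + gamma * sigma2 powr alpha * (2 powr x - 1) powr alpha) / x"

definition gbar :: "real \<Rightarrow> real \<Rightarrow> real \<Rightarrow> real \<Rightarrow> real \<Rightarrow> real" where
  "gbar sigma2 alpha gamma P0 x =
     (P0 + gamma * sigma2 powr alpha * (2 powr x - 1) powr alpha) / x"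

definition Pa :: "real \<Rightarrow> real \<Rightarrow> real" where
  "Pa sigma2 Ra = (2 powr Ra - 1) * sigma2"

definition Rtilde :: "real \<Rightarrow> real \<Rightarrow> real \<Rightarrow> real" where
  "Rtilde sigma2 Pmax Ra = min Ra (Rmax sigma2 Pmax)"

definition Ptilde :: "real \<Rightarrow> real \<Rightarrow> real \<Rightarrow> real" where
  "Ptilde sigma2 Pmax Ra = min (Pa sigma2 Ra) Pmax"

definition is_Ra :: "real \<Rightarrow> real \<Rightarrow> real \<Rightarrow> real \<Rightarrow> real \<Rightarrow> real \<Rightarrow> bool" where
  "is_Ra sigma2 alpha gamma P0 Psleep Ra \<longleftrightarrow>
     (if P0 = Psleep \<and> alpha = 1 then Ra = 0
      else Ra > 0 \<and> (\<forall>x>0. fa sigma2 alpha gamma P0 Psleep Ra \<le> fa sigma2 alpha gamma P0 Psleep x))"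

definition EE_inf :: "real \<Rightarrow> real \<Rightarrow> real \<Rightarrow> real \<Rightarrow> real \<Rightarrow> real \<Rightarrow> real \<Rightarrow> real \<Rightarrow> real \<Rightarrow> real \<Rightarrow> real" where
  "EE_inf T arol sigma2 Pmax alpha gamma P0 Psleep Ra SE =
     (let B = bandwidth T arol; Rt = Rtilde sigma2 Pmax Ra; Pt = Ptilde sigma2 Pmax Ra in
      if SE \<le> Rt / (1 + arol)
      then B * SE / (Psleep + SE * (1 + arol) / Rt * (P0 - Psleep + gamma * Pt powr alpha))
      else B * SE / (P0 + gamma * sigma2 powr alpha * (2 powr (SE * (1 + arol)) - 1) powr alpha))"

end

theory Submission
  imports Defs
begin

lemma helper_lin:
  fixes B s t Psl k :: real
  assumes "0 < s" "s \<le> t" "0 \<le> Psl" "0 < k" "0 < B"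
  shows "B * s / (Psl + s * k) \<le> B * t / (Psl + t * k)"
proof -
  have p1: "Psl + s * k > 0" "Psl + t * k > 0" using assms by (auto intro!: add_nonneg_pos)
  have "s * Psl \<le> t * Psl" using assms by (intro mult_right_mono) auto
  hence "s * (Psl + t * k) \<le> t * (Psl + s * k)" by (simp add: algebra_simps)
  hence "B * (s * (Psl + t * k)) \<le> B * (t * (Psl + s * k))" using assms by simp
  thus ?thesis using p1 by (simp add: divide_simps algebra_simps)
qed

lemma helper_ratio:
  fixes B c x y Nx Ny :: real
  assumes "0 < x" "0 < y" "0 < Nx" "0 < Ny" "0 < B" "0 < c" "Ny / y \<le> Nx / x"
  shows "B * (x / c) / Nx \<le> B * (y / c) / Ny"
proof -
  have "Ny * x \<le> Nx * y" using assms by (simp add: divide_simps)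
  hence "B * (Ny * x) \<le> B * (Nx * y)" using assms by simp
  thus ?thesis using assms by (simp add: divide_simps algebra_simps)
qed

theorem corollary2:
  fixes T arol sigma2 Pmax alpha gamma P0 Psleep Ra :: real
  assumes "T > 0" and "0 \<le> arol" and "arol \<le> 1"
    and "sigma2 > 0" and "Pmax > 0"
    and "0 < alpha" and "alpha \<le> 1" and "gamma > 0"
    and "0 \<le> Psleep" and "Psleep \<le> P0"
    and "is_Ra sigma2 alpha gamma P0 Psleep Ra"
  defines "EE \<equiv> EE_inf T arol sigma2 Pmax alpha gamma P0 Psleep Ra"
    and "SEmax \<equiv> Rmax sigma2 Pmax / (1 + arol)"
  shows "(Ra \<ge> Rmax sigma2 Pmax \<longrightarrow>
            (\<forall>SE\<in>{0<..SEmax}. EE SE \<le> EE SEmax) \<and>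
            EE SEmax = bandwidth T arol * SEmax / (P0 + gamma * Pmax powr alpha))
       \<and> (Ra < Rmax sigma2 Pmax \<longrightarrow>
            (\<forall>Rbar. Ra \<le> Rbar \<and> Rbar \<le> Rmax sigma2 Pmax \<and> 0 < Rbar \<and>
                (\<forall>x. Ra \<le> x \<and> x \<le> Rmax sigma2 Pmax \<and> 0 < x \<longrightarrow>
                     gbar sigma2 alpha gamma P0 Rbar \<le> gbar sigma2 alpha gamma P0 x)
              \<longrightarrow> (let SEbar = Rbar / (1 + arol) in
                     SEbar \<in> {0<..SEmax} \<and>
                     (\<forall>SE\<in>{0<..SEmax}. EE SE \<le> EE SEbar) \<and>
                     EE SEbar = bandwidth T arol * SEbar /
                       (P0 + gamma * sigma2 powr alpha * (2 powr Rbar - 1) powr alpha))))"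
proof -
  define c where "c = 1 + arol"
  define Rm where "Rm = Rmax sigma2 Pmax"
  define B where "B = bandwidth T arol"
  define K where "K x = gamma * sigma2 powr alpha * (2 powr x - 1) powr alpha" for x
  have c0: "c > 0" using assms c_def by simp
  have B0: "B > 0" using assms by (simp add: B_def bandwidth_def)
  have Rm0: "Rm > 0"
  proof -
    have "1 + Pmax / sigma2 > 1" using assms by simp
    thus ?thesis by (simp add: Rm_def Rmax_def)
  qed
  have Rm2: "2 powr Rm - 1 = Pmax / sigma2"
    using assms by (simp add: Rm_def Rmax_def add_pos_pos divide_pos_pos)
  have Ra0: "Ra \<ge> 0" using assms(11) unfolding is_Ra_def by (auto split: if_splits)
  have Kpos: "K x > 0" if "x > 0" for x
  proof -
    have "2 powr x > 1" using that by simp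
    hence "(2 powr x - 1) powr alpha > 0" using that by simp
    moreover have "sigma2 powr alpha > 0" using assms by simp
    ultimately show ?thesis using assms unfolding K_def by simp
  qed
  have Nx: "P0 + K x > 0" if "x > 0" for x using Kpos[OF that] assms by linarith
  have EEelse: "EE (x / c) = B * (x / c) / (P0 + K x)"
    if "x > Rtilde sigma2 Pmax Ra" for x
    using that c0 unfolding EE_def EE_inf_def Let_def B_def K_def c_def
    by (auto simp: divide_simps)
  have EEfirst: "EE SE = B * SE / (Psleep + SE * (c / Rtilde sigma2 Pmax Ra) *
       (P0 - Psleep + gamma * Ptilde sigma2 Pmax Ra powr alpha))"
    if "SE \<le> Rtilde sigma2 Pmax Ra / c" for SE
    using that unfolding EE_def EE_inf_def Let_def B_def c_def by simp
  have part1: ?thesis if "Ra \<ge> Rm"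
  proof -
    have Rt: "Rtilde sigma2 Pmax Ra = Rm" using that by (simp add: Rtilde_def Rm_def)
    have "2 powr Ra \<ge> 2 powr Rm" using that by simp
    hence "(2 powr Rm - 1) * sigma2 \<le> (2 powr Ra - 1) * sigma2" using assms
      by (intro mult_right_mono) auto
    hence "Pa sigma2 Ra \<ge> Pmax" using Rm2 assms by (simp add: Pa_def)
    hence Pt: "Ptilde sigma2 Pmax Ra = Pmax" by (simp add: Ptilde_def)
    define A where "A = P0 - Psleep + gamma * Pmax powr alpha"
    have A0: "A > 0" using assms by (simp add: A_def add_nonneg_pos)
    have k0: "c / Rm * A > 0" using A0 c0 Rm0 by simp
    have SEm: "SEmax = Rm / c" by (simp add: SEmax_def Rm_def c_def)
    have E: "EE SE = B * SE / (Psleep + SE * (c / Rm * A))" if "SE \<le> SEmax" for SE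
      using EEfirst[of SE] that by (simp add: Rt Pt SEm A_def mult.assoc)
    have val: "EE SEmax = B * SEmax / (P0 + gamma * Pmax powr alpha)"
      using E[of SEmax] c0 Rm0 by (simp add: SEm A_def)
    have "\<forall>SE\<in>{0<..SEmax}. EE SE \<le> EE SEmax"
      using E helper_lin[OF _ _ assms(9) k0 B0] by auto
    with val that show ?thesis by (auto simp: Rm_def B_def)
  qed
  have part2: ?thesis if "Ra < Rm"
  proof -
    have Rt: "Rtilde sigma2 Pmax Ra = Ra" using that by (simp add: Rtilde_def Rm_def)
    have "2 powr Ra < 2 powr Rm" using that by simp
    hence "(2 powr Ra - 1) * sigma2 < (2 powr Rm - 1) * sigma2" using assms
      by (intro mult_strict_right_mono) auto
    hence "Pa sigma2 Ra < Pmax" using Rm2 assms by (simp add: Pa_def)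
    hence Pt: "Ptilde sigma2 Pmax Ra = Pa sigma2 Ra" by (simp add: Ptilde_def)
    have "2 powr Ra - 1 \<ge> 0" using Ra0 ge_one_powr_ge_zero[of 2 Ra] by simp
    hence PaK: "gamma * Pa sigma2 Ra powr alpha = K Ra"
      using assms by (simp add: Pa_def K_def powr_mult)
    have SEm: "SEmax = Rm / c" by (simp add: SEmax_def Rm_def c_def)
    have EEra: "EE (x / c) = B * (x / c) / (Psleep + x / Ra * (P0 - Psleep + K Ra))"
      if "x \<le> Ra" for x
    proof -
      have "x / c \<le> Ra / c" using that c0 by (simp add: divide_right_mono)
      thus ?thesis using EEfirst[of "x/c"] c0 by (simp add: Rt Pt PaK)
    qed
    have EEra_eq: "EE (Ra / c) = B * (Ra / c) / (P0 + K Ra)" if "Ra > 0"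
      using EEra[of Ra] that by simp
    show ?thesis
    proof -
      {
        fix Rbar assume Rb: "Ra \<le> Rbar" "Rbar \<le> Rm" "0 < Rbar"
          and min: "\<forall>x. Ra \<le> x \<and> x \<le> Rm \<and> 0 < x \<longrightarrow>
                     gbar sigma2 alpha gamma P0 Rbar \<le> gbar sigma2 alpha gamma P0 x"
        have gb: "gbar sigma2 alpha gamma P0 x = (P0 + K x) / x" for x
          by (simp add: gbar_def K_def)
        have valb: "EE (Rbar / c) = B * (Rbar / c) / (P0 + K Rbar)"
        proof (cases "Rbar > Ra")
          case True thus ?thesis using EEelse Rt by simp
        next
          case False thus ?thesis using Rb EEra_eq by simp
        qed
        have cmp: "B * (x / c) / (P0 + K x) \<le> EE (Rbar / c)"
          if "Ra \<le> x" "x \<le> Rm" "0 < x" for x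
          unfolding valb using min that Rb
          by (intro helper_ratio[OF _ _ Nx Nx B0 c0]) (auto simp: gb)
        have bound: "EE SE \<le> EE (Rbar / c)" if "SE \<in> {0<..SEmax}" for SE
        proof -
          define x where "x = SE * c"
          have SEx: "SE = x / c" using c0 by (simp add: x_def)
          have x0: "x > 0" "x \<le> Rm" using that c0 by (auto simp: x_def SEm divide_simps)
          show ?thesis
          proof (cases "x > Ra")
            case True
            thus ?thesis using EEelse[of x] Rt cmp[of x] x0 SEx by simp
          next
            case False
            hence Ra0': "Ra > 0" using x0 by simp
            have k0: "c / Ra * (P0 - Psleep + K Ra) > 0"
              using Kpos[OF Ra0'] Ra0' assms c0 by simp
            have E1: "EE y = B * y / (Psleep + y * (c / Ra * (P0 - Psleep + K Ra)))"
              if "y \<le> Ra / c" for y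
              using EEfirst[of y] that by (simp add: Rt Pt PaK mult.assoc)
            have "SE \<le> Ra / c" using False SEx c0 by (simp add: divide_right_mono)
            hence "EE SE \<le> EE (Ra / c)" using E1[of SE] E1[of "Ra/c"] that
              by (simp only: order_refl) (rule helper_lin[OF _ _ assms(9) k0 B0], auto)
            moreover have "EE (Ra / c) \<le> EE (Rbar / c)"
              using EEra_eq[OF Ra0'] cmp[of Ra] Ra0' \<open>Ra < Rm\<close> by simp
            ultimately show ?thesis by linarith
          qed
        qed
        have "Rbar / c \<in> {0<..SEmax}" using Rb c0 by (auto simp: SEm divide_simps)
        hence "let SEbar = Rbar / c in SEbar \<in> {0<..SEmax} \<and>
              (\<forall>SE\<in>{0<..SEmax}. EE SE \<le> EE SEbar) \<and>
              EE SEbar = B * SEbar / (P0 + K Rbar)"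
          using bound valb by (simp add: Let_def)
      }
      thus ?thesis using that by (simp add: Rm_def c_def B_def K_def)
    qed
  qed
  show ?thesis using part1 part2 by (auto simp: Rm_def)
qed

end
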